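(* Let $k\ge 2$ be an integer that is not a perfect square, and let $R_k\subseteq\{0,1,\dots,k-1\}$ be the set of remainders modulo $k$ of the indices $\xi$ of solutions of $T_\xi=kT_t$ (as defined in the context), with $\upsilon=|R_k|$. Then: (i) $0\in R_k$ and $k-1\in R_k$; (ii) for every $\mu\in R_k$ one also has $k-1-\mu\in R_k$, so that the remainders come in pairs $\{\mu,\,k-1-\mu\}$ whose sum is $k-1$; (iii) $\upsilon$ is even; (iv) $\sum_{\mu\in R_k}\mu=(k-1)\,\upsilon/2$.
   Context: For an integer $m\ge 0$, $T_m=m(m+1)/2$ denotes the $m$-th triangular number. For a non-square integer $k\ge 2$, consider the equation $T_\xi=k\,T_t$ in nonnegative integers $t,\xi$. Let $R_k=\{\xi \bmod k : \exists\, t\ge 0 \text{ with } T_\xi=kT_t\}$, the set of least nonnegative remainders modulo $k$ of all $\xi$ occurring in solutions $(t,\xi)$, and $\upsilon=|R_k|$. *)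

theory Defs
  imports Main
begin

definition tri :: "nat \<Rightarrow> nat" where
  "tri m = m * (m + 1) div 2"

definition residue_set :: "nat \<Rightarrow> nat set" where
  "residue_set k = {\<xi> mod k | \<xi>. \<exists>t. tri \<xi> = k * tri t}"

end

theory Submission imports Defs "HOL-Analysis.Kronecker_Approximation_Theorem" "HOL-Computational_Algebra.Nth_Powers"
begin

lemma nonsq_int:
  fixes x y :: int
  assumes ns: "\<not> (\<exists>m. m ^ 2 = k)" and eq: "x^2 = int k * y^2"
  shows "y = 0"
proof (rule ccontr)
  assume y: "y \<noteq> 0"
  define a where "a = nat \<bar>x\<bar>"
  define b where "b = nat \<bar>y\<bar>"
  have "int (a^2) = int (k * b^2)" using eq by (simp add: a_def b_def)
  hence ab: "a^2 = k * b^2" by linarith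
  have b0: "b^2 \<noteq> 0" using y by (simp add: b_def)
  have "is_nth_power 2 (k * b^2)" using ab by (metis is_nth_power_nth_power)
  hence "is_nth_power 2 k" using is_nth_power_mult_cancel_right[of 2 "b^2" k] b0 by auto
  then show False using ns by (auto elim: is_nth_powerE)
qed

lemma dirichlet_sqrt:
  fixes N :: nat assumes "N > 0"
  obtains x y :: int where "0 < y" "y \<le> int N" "\<bar>of_int y * sqrt k - of_int x\<bar> < 1 / N"
proof -
  obtain q :: int and p :: "nat \<Rightarrow> int" where "0 < q" "q \<le> int (N^1)" "\<And>i. i<1 \<Longrightarrow> \<bar>of_int q * (\<lambda>_. sqrt k) i - of_int (p i)\<bar> < 1/N"
    using Dirichlet_approx_simult[OF assms, where \<theta>="\<lambda>_. sqrt k" and n=1] by blast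
  then show ?thesis using that[of q "p 0"] by auto
qed

lemma norm_bound:
  fixes x y :: int and N :: nat
  assumes "N > 0" "0 < y" "y \<le> int N" "\<bar>of_int y * sqrt k - of_int x\<bar> < 1 / N" "k \<ge> 1"
  shows "\<bar>x^2 - int k * y^2\<bar> \<le> 2 * int k"
proof -
  define d where "d = of_int y * sqrt k - of_int x"
  have "1 / real N \<le> 1" using assms(1) by simp
  hence d1: "\<bar>d\<bar> < 1" using assms(4) unfolding d_def by linarith
  have yd: "of_int y * \<bar>d\<bar> < 1"
  proof -
    have "of_int y * \<bar>d\<bar> \<le> real N * \<bar>d\<bar>" using assms(3) by (simp add: mult_right_mono)
    also have "\<dots> < real N * (1 / N)" using assms(1,4) unfolding d_def by (intro mult_strict_left_mono) auto
    also have "\<dots> = 1" using assms(1) by simp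
    finally show ?thesis .
  qed
  have "sqrt k \<le> sqrt ((real k)^2)" using assms(5) by (intro real_sqrt_le_mono) (simp add: power2_eq_square)
  hence sk: "sqrt k \<le> k" by simp
  have sq: "(sqrt k)^2 = k" by simp
  have "real_of_int (x^2 - int k * y^2) = d^2 - 2 * (of_int y * d) * sqrt k"
    unfolding d_def by (simp add: power2_eq_square algebra_simps sq[unfolded power2_eq_square])
  moreover have "\<bar>d^2 - 2 * (of_int y * d) * sqrt k\<bar> \<le> \<bar>d^2\<bar> + \<bar>2 * (of_int y * d) * sqrt k\<bar>"
    by (rule abs_triangle_ineq4)
  moreover have "\<bar>2 * (of_int y * d) * sqrt k\<bar> = 2 * (of_int y * \<bar>d\<bar>) * sqrt k"
    using assms(2) by (simp add: abs_mult)
  ultimately have "\<bar>real_of_int (x^2 - int k * y^2)\<bar> \<le> d^2 + 2 * (of_int y * \<bar>d\<bar>) * sqrt k"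
    by simp
  also have "\<dots> < 1 + 2 * sqrt k"
  proof -
    have "d^2 < 1" using d1 by (simp add: abs_square_less_1)
    moreover have "(of_int y * \<bar>d\<bar>) * sqrt k \<le> 1 * sqrt k" using yd by (intro mult_right_mono) auto
    hence "2 * (of_int y * \<bar>d\<bar>) * sqrt k \<le> 2 * sqrt k" by simp
    ultimately show ?thesis by linarith
  qed
  also have "\<dots> \<le> 1 + 2 * real k" using sk by linarith
  finally have "\<bar>x^2 - int k * y^2\<bar> < 1 + 2 * int k" by linarith
  thus ?thesis by linarith
qed

lemma infinite_P:
  assumes ns: "\<not> (\<exists>m. m ^ 2 = k)" and k1: "k \<ge> 1"
  shows "infinite {(x::int, y::int). 0 < y \<and> \<bar>x^2 - int k * y^2\<bar> \<le> 2 * int k}" (is "infinite ?P")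
proof
  assume fin: "finite ?P"
  define g where "g = (\<lambda>(x::int, y::int). \<bar>of_int y * sqrt k - of_int x\<bar>)"
  have gpos: "g p > 0" if "p \<in> ?P" for p
  proof -
    obtain x y where p: "p = (x, y)" "0 < y" using \<open>p \<in> ?P\<close> by auto
    have "of_int x \<noteq> of_int y * sqrt k"
    proof
      assume h: "of_int x = of_int y * sqrt k"
      hence "(of_int x)^2 = (of_int y)^2 * (sqrt k)^2" by (simp add: power_mult_distrib)
      hence "real_of_int (x^2) = real_of_int (int k * y^2)" by simp
      hence "x^2 = int k * y^2" by (simp only: of_int_eq_iff)
      hence "y = 0" by (rule nonsq_int[OF ns])
      thus False using p by auto
    qed
    thus ?thesis using p by (auto simp: g_def)
  qed
  define \<delta> where "\<delta> = Min (insert 1 (g ` ?P))"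
  have \<delta>pos: "\<delta> > 0" unfolding \<delta>_def using fin gpos by (subst Min_gr_iff) auto
  have \<delta>le: "\<delta> \<le> g p" if "p \<in> ?P" for p unfolding \<delta>_def using fin that by (intro Min_le) auto
  obtain N :: nat where N: "N > 1 / \<delta>" using reals_Archimedean2 by blast
  have N0: "N > 0" using N \<delta>pos by (metis divide_pos_pos of_nat_0_less_iff order.strict_trans zero_less_one)
  obtain x y :: int where xy: "0 < y" "y \<le> int N" "\<bar>of_int y * sqrt k - of_int x\<bar> < 1 / N"
    using dirichlet_sqrt[OF N0] by metis
  have inP: "(x, y) \<in> ?P" using norm_bound[OF N0 xy k1] xy by auto
  have "1 / real N < \<delta>" using N \<delta>pos N0 by (simp add: field_simps)
  hence "g (x, y) < \<delta>" using xy(3) by (simp add: g_def)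
  thus False using \<delta>le[OF inP] by simp
qed

lemma pell_exists:
  assumes ns: "\<not> (\<exists>m. m ^ 2 = k)" and k1: "k \<ge> 1"
  shows "\<exists>u v :: int. u^2 - int k * v^2 = 1 \<and> v \<noteq> 0"
proof -
  define P where "P = {(x::int, y::int). 0 < y \<and> \<bar>x^2 - int k * y^2\<bar> \<le> 2 * int k}"
  have inf: "infinite P" using infinite_P[OF ns k1] by (simp add: P_def)
  define nm where "nm = (\<lambda>(x::int, y::int). x^2 - int k * y^2)"
  define f where "f = (\<lambda>p. (nm p, fst p mod nm p, snd p mod nm p))"
  have nmnz: "nm p \<noteq> 0" if pP: "p \<in> P" for p
  proof
    assume h: "nm p = 0"
    obtain x y where p: "p = (x, y)" "0 < y" using pP by (cases p) (auto simp: P_def)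
    have "x^2 = int k * y^2" using h p by (simp add: nm_def)
    from nonsq_int[OF ns this] show False using p by simp
  qed
  have nmb: "\<bar>nm p\<bar> \<le> 2 * int k" if "p \<in> P" for p using that by (auto simp: P_def nm_def)
  have modb: "\<bar>a mod n\<bar> \<le> 2 * int k" if "\<bar>n\<bar> \<le> 2 * int k" "n \<noteq> 0" for a n :: int
  proof (cases "n > 0")
    case True
    have "0 \<le> a mod n" "a mod n < n" using True by simp_all
    then show ?thesis using that by simp
  next
    case False
    have "a mod n \<le> 0" "n < a mod n" using False that(2) neg_mod_bound[of n a] neg_mod_sign[of n a] by simp_all
    then show ?thesis using that by simp
  qed
  define B where "B = {-2 * int k..2 * int k}"
  have "f ` P \<subseteq> B \<times> B \<times> B"
  proof
    fix q assume "q \<in> f ` P"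
    then obtain p where p: "p \<in> P" "q = f p" by blast
    have "\<bar>nm p\<bar> \<le> 2 * int k" "\<bar>fst p mod nm p\<bar> \<le> 2 * int k" "\<bar>snd p mod nm p\<bar> \<le> 2 * int k"
      using nmb[OF p(1)] nmnz[OF p(1)] modb by auto
    thus "q \<in> B \<times> B \<times> B" using p(2) by (auto simp: f_def B_def abs_le_iff)
  qed
  hence "finite (f ` P)" by (rule finite_subset) (auto simp: B_def)
  then obtain p0 where "p0 \<in> P" and inf0: "infinite {p \<in> P. f p = f p0}"
    using pigeonhole_infinite[OF inf] by blast
  then obtain p1 where p1: "p1 \<in> {p \<in> P. f p = f p0}" using infinite_imp_nonempty by blast
  have "infinite ({p \<in> P. f p = f p0} - {p1})" using inf0 by simp
  then obtain p2 where p2: "p2 \<in> {p \<in> P. f p = f p0} - {p1}" using infinite_imp_nonempty by blast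
  obtain x y where xy: "p1 = (x, y)" by force
  obtain x' y' where xy': "p2 = (x', y')" by force
  define n where "n = nm p1"
  have n0: "n \<noteq> 0" using nmnz p1 by (simp add: n_def)
  have fe: "f p1 = f p2" using p1 p2 by simp
  have nx: "n = x^2 - int k * y^2" by (simp add: n_def nm_def xy)
  have nx': "n = x'^2 - int k * y'^2" using fe by (simp add: n_def nm_def xy xy' f_def)
  have mx: "x mod n = x' mod n" and my: "y mod n = y' mod n"
    using fe unfolding n_def f_def xy xy' nm_def by (simp_all del: of_nat_mult) (metis prod.inject)+
  obtain a where a: "x' - x = n * a" using mx by (metis dvd_def mod_eq_dvd_iff)
  obtain b where b: "y' - y = n * b" using my by (metis dvd_def mod_eq_dvd_iff)
  have y0: "y > 0" "y' > 0" using p1 p2 by (auto simp: P_def xy xy')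
  define u where "u = 1 + x * a - int k * y * b"
  define v where "v = x * b - a * y"
  have x'e: "x' = x + n * a" using a by simp
  have y'e: "y' = y + n * b" using b by simp
  have U: "x * x' - int k * y * y' = n * u"
    unfolding u_def x'e y'e by (simp add: algebra_simps nx power2_eq_square)
  have V: "x * y' - x' * y = n * v"
    unfolding v_def x'e y'e by (simp add: algebra_simps)
  have brah: "(x * x' - int k * y * y')^2 - int k * (x * y' - x' * y)^2 = (x^2 - int k * y^2) * (x'^2 - int k * y'^2)"
    by (simp add: power2_eq_square algebra_simps)
  hence "(n * u)\<^sup>2 - int k * (n * v)\<^sup>2 = n * n" using U V nx nx' by simp
  hence "n^2 * (u^2 - int k * v^2) = n^2 * 1" by (simp add: power2_eq_square algebra_simps)
  hence uv: "u^2 - int k * v^2 = 1" using n0 by simp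
  have "v \<noteq> 0"
  proof
    assume "v = 0"
    hence e: "x * y' = x' * y" using V by simp
    have "n * y'^2 = n * y^2"
    proof -
      have "n * y'^2 = (x * y')^2 - int k * y^2 * y'^2" by (simp add: nx power2_eq_square algebra_simps)
      also have "\<dots> = (x' * y)^2 - int k * y^2 * y'^2" using e by simp
      also have "\<dots> = n * y^2" by (simp add: nx' power2_eq_square algebra_simps)
      finally show ?thesis .
    qed
    hence "y'^2 = y^2" using n0 by simp
    hence "y' = y" using y0 by (simp add: power2_eq_iff)
    hence "x' = x" using e y0 by simp
    thus False using p2 \<open>y' = y\<close> xy xy' by auto
  qed
  thus ?thesis using uv by blast
qed

lemma pell_pos:
  assumes ns: "\<not> (\<exists>m. m ^ 2 = k)" and k1: "k \<ge> 1"
  shows "\<exists>u v :: int. u^2 - int k * v^2 = 1 \<and> u > 0 \<and> v > 0 \<and> v \<ge> int n"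
proof (induction n)
  case 0
  obtain u v :: int where uv: "u^2 - int k * v^2 = 1" "v \<noteq> 0" using pell_exists[OF ns k1] by blast
  have "u \<noteq> 0"
  proof
    assume "u = 0"
    hence "int k * v^2 = -1" using uv by simp
    moreover have "int k * v^2 \<ge> 0" by simp
    ultimately show False by linarith
  qed
  hence "\<bar>u\<bar>^2 - int k * \<bar>v\<bar>^2 = 1 \<and> \<bar>u\<bar> > 0 \<and> \<bar>v\<bar> > 0 \<and> \<bar>v\<bar> \<ge> int 0" using uv by simp
  thus ?case by blast
next
  case (Suc n)
  then obtain u v :: int where uv: "u^2 - int k * v^2 = 1" "u > 0" "v > 0" "v \<ge> int n" by blast
  define u' where "u' = u^2 + int k * v^2"
  define v' where "v' = 2 * u * v"
  have "u'^2 - int k * v'^2 = (u^2 - int k * v^2)^2" by (simp add: u'_def v'_def power2_eq_square algebra_simps)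
  hence e: "u'^2 - int k * v'^2 = 1" using uv by simp
  have "u' > 0" using uv by (simp add: u'_def add_pos_nonneg)
  moreover have "v' \<ge> 2 * v" using uv by (simp add: v'_def)
  ultimately show ?case using e uv by (intro exI[of _ u'] exI[of _ v']) auto
qed

lemma tri2: "2 * tri m = m * (m + 1)"
  unfolding tri_def by simp

lemma tri_eq_iff: "tri \<xi> = k * tri t \<longleftrightarrow> \<xi> * (\<xi> + 1) = k * (t * (t + 1))"
  using tri2[of \<xi>] tri2[of t] by (metis mult.left_commute mult_cancel_left zero_neq_numeral)

lemma reflect:
  fixes \<xi> t k :: nat
  assumes ns: "\<not> (\<exists>m. m ^ 2 = k)" and k2: "k \<ge> 2"
    and eq: "\<xi> * (\<xi> + 1) = k * (t * (t + 1))"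
  shows "\<exists>\<xi>' t'. \<xi>' * (\<xi>' + 1) = k * (t' * (t' + 1)) \<and> k dvd (\<xi>' + \<xi> + 1)"
proof -
  define X :: int where "X = 2 * int \<xi> + 1"
  define Y :: int where "Y = 2 * int t + 1"
  define K :: int where "K = int k"
  have K2: "K \<ge> 2" using k2 by (simp add: K_def)
  have eqi: "int \<xi> * (int \<xi> + 1) = K * (int t * (int t + 1))"
  proof -
    have "int (\<xi> * (\<xi> + 1)) = int (k * (t * (t + 1)))" using eq by simp
    thus ?thesis unfolding K_def by (simp only: of_nat_mult of_nat_add of_nat_1)
  qed
  have XY: "X^2 - K * Y^2 = 1 - K"
    unfolding X_def Y_def using eqi by (simp add: power2_eq_square algebra_simps)
  have X1: "X \<ge> 1" and Y1: "Y \<ge> 1" by (simp_all add: X_def Y_def)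
  obtain u v :: int where uv: "u^2 - K * v^2 = 1" "u > 0" "v > 0" "v \<ge> int (nat X)"
    using pell_pos[OF ns, of "nat X"] k2 by (auto simp: K_def)
  have vX: "v \<ge> X" using uv(4) X1 by simp
  define a where "a = 1 + 2 * K * v^2"
  define b where "b = 2 * u * v"
  have ab: "a^2 - K * b^2 = 1"
  proof -
    have "u^2 = 1 + K * v^2" using uv(1) by simp
    hence hb: "b^2 = 4 * (1 + K * v^2) * v^2" by (simp add: b_def power_mult_distrib)
    show ?thesis unfolding hb by (simp add: a_def power2_eq_square algebra_simps)
  qed
  have aX: "a > X"
  proof -
    have "v^2 \<ge> v" using uv(3) by (simp add: power2_eq_square)
    moreover have "1 * v^2 \<le> (2 * K) * v^2" using K2 by (intro mult_right_mono) auto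
    hence "2 * K * v^2 \<ge> v^2" by simp
    ultimately show ?thesis using vX by (simp add: a_def)
  qed
  define X' where "X' = K * b * Y - a * X"
  define Y' where "Y' = a * Y - b * X"
  have norm': "X'^2 - K * Y'^2 = (a^2 - K * b^2) * (X^2 - K * Y^2)"
    unfolding X'_def Y'_def by (simp add: power2_eq_square algebra_simps)
  hence XY': "X'^2 - K * Y'^2 = 1 - K" using ab XY by simp
  have X'pos: "X' > 0"
  proof -
    have "(K * b * Y)^2 = (a^2 - 1) * (K * Y^2)" using ab by (simp add: power2_eq_square algebra_simps)
    also have "\<dots> = (a^2 - 1) * (X^2 + (K - 1))" using XY by (simp add: algebra_simps)
    finally have e1: "(K * b * Y)^2 = (a^2 - 1) * (X^2 + (K - 1))" .
    have "a \<ge> X + 1" using aX by simp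
    hence "a^2 \<ge> (X+1)^2" using X1 by (intro power_mono) auto
    hence a2: "a^2 - 1 > X^2" using X1 by (simp add: power2_eq_square algebra_simps)
    have "(a^2 - 1) * (K - 1) \<ge> (a^2 - 1) * 1" using a2 K2 zero_le_power2[of X] by (intro mult_left_mono) linarith+
    hence "(K * b * Y)^2 - (a * X)^2 > 0" using e1 a2 by (simp add: power2_eq_square algebra_simps)
    hence "(a * X)^2 < (K * b * Y)^2" by simp
    moreover have "K * b * Y \<ge> 0" using K2 uv Y1 by (simp add: b_def)
    ultimately have "a * X < K * b * Y" by (rule power_less_imp_less_base)
    thus ?thesis by (simp add: X'_def)
  qed
  define M where "M = u * v * Y - v^2 * X"
  have X'M: "X' = 2 * K * M - X" by (simp add: X'_def M_def a_def b_def power2_eq_square algebra_simps)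
  define T where "T = int t + K * v^2 * Y - u * v * X"
  have Y'T: "Y' = 2 * T + 1" by (simp add: Y'_def T_def a_def b_def Y_def power2_eq_square algebra_simps)
  define Z where "Z = K * M - int \<xi> - 1"
  have X'Z: "X' = 2 * Z + 1" by (simp add: X'M Z_def X_def algebra_simps)
  have Z0: "Z \<ge> 0" using X'pos X'Z by simp
  define T' where "T' = (if T \<ge> 0 then T else - T - 1)"
  have T'0: "T' \<ge> 0" by (simp add: T'_def)
  have TT: "T' * (T' + 1) = T * (T + 1)" by (simp add: T'_def algebra_simps)
  have "Z * (Z + 1) = K * (T * (T + 1))"
    using XY' unfolding X'Z Y'T by (simp add: power2_eq_square algebra_simps)
  hence ZT: "Z * (Z + 1) = K * (T' * (T' + 1))" using TT by simp
  define \<xi>' where "\<xi>' = nat Z"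
  define t' where "t' = nat T'"
  have "int (\<xi>' * (\<xi>' + 1)) = int (k * (t' * (t' + 1)))"
    using ZT Z0 T'0 unfolding \<xi>'_def t'_def K_def by (simp del: of_nat_mult add: algebra_simps) (simp add: algebra_simps)
  hence e': "\<xi>' * (\<xi>' + 1) = k * (t' * (t' + 1))" by (simp only: of_nat_eq_iff)
  have "int (\<xi>' + \<xi> + 1) = K * M" using Z0 by (simp add: \<xi>'_def Z_def)
  hence "int k dvd int (\<xi>' + \<xi> + 1)" by (simp add: K_def)
  hence "k dvd (\<xi>' + \<xi> + 1)" by (simp only: int_dvd_int_iff)
  thus ?thesis using e' by blast
qed

lemma invol_even:
  assumes "finite A" "\<forall>x\<in>A. f x \<in> A \<and> f x \<noteq> x \<and> f (f x) = x"
  shows "even (card A)"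
  using assms
proof (induction "card A" arbitrary: A rule: less_induct)
  case less
  show ?case
  proof (cases "A = {}")
    case True then show ?thesis by simp
  next
    case False
    then obtain x where x: "x \<in> A" by blast
    define A' where "A' = A - {x, f x}"
    have fx: "f x \<in> A" "f x \<noteq> x" using less.prems x by auto
    have cA: "card A = card A' + 2"
    proof -
      have "card A' = card A - card {x, f x}" unfolding A'_def using less.prems(1) x fx
        by (intro card_Diff_subset) auto
      moreover have "card {x, f x} = 2" using fx by simp
      moreover have "card A \<ge> card {x, f x}" using less.prems(1) x fx by (intro card_mono) auto
      ultimately show ?thesis by linarith
    qed
    have "\<forall>y\<in>A'. f y \<in> A' \<and> f y \<noteq> y \<and> f (f y) = y"
    proof
      fix y assume y: "y \<in> A'"
      hence yA: "y \<in> A" "y \<noteq> x" "y \<noteq> f x" by (auto simp: A'_def)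
      have p: "f y \<in> A" "f y \<noteq> y" "f (f y) = y" using less.prems(2) yA(1) by auto
      have fxx: "f (f x) = x" using less.prems(2) x by auto
      have "f y \<noteq> x" proof assume "f y = x" hence "f (f y) = f x" by simp thus False using p yA by simp qed
      moreover have "f y \<noteq> f x" proof assume "f y = f x" hence "f (f y) = f (f x)" by simp thus False using p yA fxx by simp qed
      ultimately show "f y \<in> A' \<and> f y \<noteq> y \<and> f (f y) = y" using p by (simp add: A'_def)
    qed
    moreover have "finite A'" using less.prems(1) by (simp add: A'_def)
    ultimately have "even (card A')" using less.hyps[of A'] cA by simp
    thus ?thesis using cA by simp
  qed
qed

theorem proposition1:
  fixes k :: nat
  assumes "k \<ge> 2" and "\<not> (\<exists>m. m ^ 2 = k)"
  shows "0 \<in> residue_set k \<and> k - 1 \<in> residue_set k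
    \<and> (\<forall>\<mu>\<in>residue_set k. k - 1 - \<mu> \<in> residue_set k)
    \<and> even (card (residue_set k))
    \<and> 2 * (\<Sum>\<mu>\<in>residue_set k. \<mu>) = (k - 1) * card (residue_set k)"
proof -
  let ?R = "residue_set k"
  have k0: "k > 0" using assms(1) by simp
  have mem: "\<mu> \<in> ?R \<longleftrightarrow> (\<exists>\<xi> t. \<mu> = \<xi> mod k \<and> \<xi> * (\<xi> + 1) = k * (t * (t + 1)))" for \<mu>
    unfolding residue_set_def tri_eq_iff by blast
  have lt: "\<mu> < k" if "\<mu> \<in> ?R" for \<mu> using that k0 unfolding mem by auto
  have "?R \<subseteq> {..<k}" using lt by blast
  hence fin: "finite ?R" by (rule finite_subset) simp
  have z: "0 \<in> ?R" unfolding mem by (intro exI[of _ 0]) simp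
  have refl: "k - 1 - \<mu> \<in> ?R" if mR: "\<mu> \<in> ?R" for \<mu>
  proof -
    obtain \<xi> t where \<xi>: "\<mu> = \<xi> mod k" "\<xi> * (\<xi> + 1) = k * (t * (t + 1))" using mR unfolding mem by blast
    obtain \<xi>' t' where \<xi>': "\<xi>' * (\<xi>' + 1) = k * (t' * (t' + 1))" "k dvd (\<xi>' + \<xi> + 1)"
      using reflect[OF assms(2,1) \<xi>(2)] by blast
    define r where "r = \<xi>' mod k"
    have "k dvd (r + \<mu> + 1)"
    proof -
      have "\<xi>' + \<xi> + 1 = k * (\<xi>' div k + \<xi> div k) + (r + \<mu> + 1)"
        unfolding r_def \<xi>(1) using div_mult_mod_eq[of \<xi>' k] div_mult_mod_eq[of \<xi> k]
        by (simp add: algebra_simps)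
      thus ?thesis using \<xi>'(2) by (metis dvd_add_right_iff dvd_triv_left)
    qed
    then obtain c where c: "r + \<mu> + 1 = k * c" by blast
    have "r < k" "\<mu> < k" using k0 by (simp_all add: r_def \<xi>(1))
    hence "k * c < k * 2" using c by linarith
    hence "c < 2" by simp
    moreover have "c \<noteq> 0" proof assume "c = 0" thus False using c by simp qed
    ultimately have "c = 1" by simp
    hence "r = k - 1 - \<mu>" using c by simp
    thus ?thesis unfolding mem using \<xi>' r_def by blast
  qed
  have km1: "k - 1 \<in> ?R" using refl[OF z] by simp
  have nofix: "k - 1 - \<mu> \<noteq> \<mu>" if mR: "\<mu> \<in> ?R" for \<mu>
  proof
    assume h: "k - 1 - \<mu> = \<mu>"
    obtain \<xi> t where \<xi>: "\<mu> = \<xi> mod k" "\<xi> * (\<xi> + 1) = k * (t * (t + 1))" using mR unfolding mem by blast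
    have "\<mu> < k" using lt mR by simp
    hence k2m: "k = 2 * \<mu> + 1" using h by linarith
    define q where "q = \<xi> div k"
    have qe: "\<xi> = k * q + \<mu>" using div_mult_mod_eq[of \<xi> k] \<xi>(1) unfolding q_def by (simp add: mult.commute)
    have "2 * \<xi> + 1 = 2 * (k * q) + (2 * \<mu> + 1)" using qe by simp
    also have "\<dots> = k * (2 * q + 1)" unfolding k2m by (simp add: algebra_simps)
    finally have "2 * \<xi> + 1 = k * (2 * q + 1)" .
    hence "k dvd (2 * \<xi> + 1)^2" by (simp add: power2_eq_square)
    moreover have "(2 * \<xi> + 1)^2 = 4 * (\<xi> * (\<xi> + 1)) + 1"
      by (simp add: power2_eq_square algebra_simps)
    ultimately have "k dvd 4 * (k * (t * (t + 1))) + 1" unfolding \<xi>(2) by simp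
    moreover have "k dvd 4 * (k * (t * (t + 1)))" by simp
    ultimately have "k dvd 1" using dvd_add_right_iff by blast
    thus False using assms(1) by simp
  qed
  have inv: "\<forall>\<mu>\<in>?R. k - 1 - \<mu> \<in> ?R \<and> k - 1 - \<mu> \<noteq> \<mu> \<and> k - 1 - (k - 1 - \<mu>) = \<mu>"
  proof
    fix \<mu> assume m: "\<mu> \<in> ?R"
    have "\<mu> < k" using lt m .
    hence "k - 1 - (k - 1 - \<mu>) = \<mu>" by arith
    thus "k - 1 - \<mu> \<in> ?R \<and> k - 1 - \<mu> \<noteq> \<mu> \<and> k - 1 - (k - 1 - \<mu>) = \<mu>"
      using refl[OF m] nofix[OF m] by blast
  qed
  have ev: "even (card ?R)" by (rule invol_even[OF fin inv])
  have "bij_betw (\<lambda>\<mu>. k - 1 - \<mu>) ?R ?R"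
    by (rule bij_betwI[where g = "\<lambda>\<mu>. k - 1 - \<mu>"]) (use inv in auto)
  hence "(\<Sum>\<mu>\<in>?R. k - 1 - \<mu>) = (\<Sum>\<mu>\<in>?R. \<mu>)" by (rule sum.reindex_bij_betw)
  hence "2 * (\<Sum>\<mu>\<in>?R. \<mu>) = (\<Sum>\<mu>\<in>?R. \<mu> + (k - 1 - \<mu>))" by (simp add: sum.distrib)
  also have "\<dots> = (\<Sum>\<mu>\<in>?R. k - 1)"
  proof (rule sum.cong)
    fix \<mu> assume "\<mu> \<in> ?R"
    hence "\<mu> < k" by (rule lt)
    thus "\<mu> + (k - 1 - \<mu>) = k - 1" by arith
  qed simp
  also have "\<dots> = (k - 1) * card ?R" by simp
  finally have s: "2 * (\<Sum>\<mu>\<in>?R. \<mu>) = (k - 1) * card ?R" .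
  have r: "\<forall>\<mu>\<in>?R. k - 1 - \<mu> \<in> ?R" using refl by blast
  show ?thesis
    apply (rule conjI, rule z)
    apply (rule conjI, rule km1)
    apply (rule conjI, rule r)
    apply (rule conjI, rule ev)
    by (rule s)
qed

end
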